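(* Let $\mathfrak g\xrightarrow{\mu}\mathfrak h$ be a crossed module of Lie algebras with action $\mathcal L$, $\phi:W\to V$ linear, and $(\rho_0^1,\rho_0^0,\rho_1)$ a 2-representation on $\phi$. For $k\in\{1,2\}$ let $(\omega_k,\alpha_k,\varphi_k)\in(\bigwedge^2\mathfrak h^*\otimes V)\oplus(\mathfrak h^*\otimes\mathfrak g^*\otimes W)\oplus(\mathfrak g^*\otimes V)$ be triples such that the following data define 2-extensions $E_k$ of $\mathfrak g\xrightarrow{\mu}\mathfrak h$ by $W\xrightarrow{\phi}V$: $\mathfrak e_0=\mathfrak h\oplus V$ with bracket $[(y_0,v_0),(y_1,v_1)]=([y_0,y_1],\rho_0^0(y_0)v_1-\rho_0^0(y_1)v_0-\omega_k(y_0,y_1))$; $\mathfrak e_1=\mathfrak g\oplus W$ with bracket $[(x_0,w_0),(x_1,w_1)]=([x_0,x_1],\rho_0^1(\mu(x_0))w_1-\rho_0^1(\mu(x_1))w_0-\omega_k'(x_0,x_1))$, where $\omega_k'(x_0,x_1)=\rho_1(x_1)\varphi_k(x_0)+\alpha_k(\mu(x_0);x_1)$; structure map $\epsilon_k(x,w)=(\mu(x),\phi(w)+\varphi_k(x))$; action $\mathcal L^{\epsilon_k}_{(y,v)}(x,w)=(\mathcal L_yx,\rho_0^1(y)w-\rho_1(x)v-\alpha_k(y;x))$; with the obvious inclusions and first-coordinate projections. Then $E_1$ and $E_2$ are equivalent if and only if there are linear maps $\lambda_0:\mathfrak h\to V$ and $\lambda_1:\mathfrak g\to W$ with (a) $\omega_2(y_0,y_1)-\omega_1(y_0,y_1)=\rho_0^0(y_0)\lambda_0(y_1)-\rho_0^0(y_1)\lambda_0(y_0)-\lambda_0([y_0,y_1])$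 for all $y_0,y_1\in\mathfrak h$; (b) $\alpha_2(y;x)-\alpha_1(y;x)=\rho_0^1(y)(\lambda_1(x))-\lambda_1(\mathcal L_yx)-\rho_1(x)(\lambda_0(y))$ for all $y\in\mathfrak h$, $x\in\mathfrak g$; (c) $\varphi_2(x)-\varphi_1(x)=\lambda_0(\mu(x))-\phi(\lambda_1(x))$ for all $x\in\mathfrak g$.
   Context: A crossed module of Lie algebras: Lie algebras $\mathfrak g,\mathfrak h$, Lie homomorphism $\mu:\mathfrak g\to\mathfrak h$, Lie homomorphism $\mathcal L:\mathfrak h\to\mathrm{Der}(\mathfrak g)$ with $\mu(\mathcal L_yx)=[y,\mu(x)]$, $\mathcal L_{\mu(x_0)}x_1=[x_0,x_1]$. A morphism of crossed modules is a pair of Lie algebra homomorphisms commuting with structure maps and intertwining actions. $\phi:W\to V$ is regarded as a crossed module with abelian brackets and zero action. 2-representation: linear $\rho_0^1:\mathfrak h\to\mathfrak{gl}(W)$, $\rho_0^0:\mathfrak h\to\mathfrak{gl}(V)$, $\rho_1:\mathfrak g\to\mathrm{Hom}(V,W)$ with $\rho_0^1,\rho_0^0$ representations, $\phi\rho_0^1(y)=\rho_0^0(y)\phi$, $\rho_1([x_0,x_1])=\rho_1(x_0)\phi\rho_1(x_1)-\rho_1(x_1)\phi\rho_1(x_0)$, $\rho_0^0(\mu(x))=\phi\rho_1(x)$, $\rho_0^1(\mu(x))=\rho_1(x)\phi$, $\rho_1(\mathcal L_yx)=\rho_0^1(y)\rho_1(x)-\rho_1(x)\rho_0^0(y)$.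 A 2-extension of $\mathfrak g\xrightarrow{\mu}\mathfrak h$ by $W\xrightarrow{\phi}V$ is a crossed module $\mathfrak e_1\to\mathfrak e_0$ with crossed module morphisms $(W\to V)\to(\mathfrak e_1\to\mathfrak e_0)\to(\mathfrak g\to\mathfrak h)$ giving short exact sequences $0\to W\to\mathfrak e_1\to\mathfrak g\to0$ and $0\to V\to\mathfrak e_0\to\mathfrak h\to0$. Two extensions are equivalent if there is an isomorphism of crossed modules between their middle terms commuting with the inclusions and projections. *)

theory Defs
  imports Complex_Main "HOL-Library.Product_Plus"
begin

text \<open>All vector spaces are over a common field 'k, given by scalar multiplications
  on (whole) types; linear maps are Vector_Spaces.linear.\<close>

definition lie_algebra ::
  "('k::field \<Rightarrow> 'a::ab_group_add \<Rightarrow> 'a) \<Rightarrow> ('a \<Rightarrow> 'a \<Rightarrow> 'a) \<Rightarrow> bool" where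
  "lie_algebra s br \<longleftrightarrow> vector_space s
     \<and> (\<forall>x. Vector_Spaces.linear s s (br x))
     \<and> (\<forall>y. Vector_Spaces.linear s s (\<lambda>x. br x y))
     \<and> (\<forall>x. br x x = 0)
     \<and> (\<forall>x y z. br x (br y z) + br y (br z x) + br z (br x y) = 0)"

definition lie_hom ::
  "('k::field \<Rightarrow> 'a::ab_group_add \<Rightarrow> 'a) \<Rightarrow> ('a \<Rightarrow> 'a \<Rightarrow> 'a) \<Rightarrow>
   ('k \<Rightarrow> 'b::ab_group_add \<Rightarrow> 'b) \<Rightarrow> ('b \<Rightarrow> 'b \<Rightarrow> 'b) \<Rightarrow> ('a \<Rightarrow> 'b) \<Rightarrow> bool" where
  "lie_hom s1 br1 s2 br2 f \<longleftrightarrow> Vector_Spaces.linear s1 s2 f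
     \<and> (\<forall>x y. f (br1 x y) = br2 (f x) (f y))"

definition linear_family ::
  "('k::field \<Rightarrow> 'a::ab_group_add \<Rightarrow> 'a) \<Rightarrow> ('k \<Rightarrow> 'b::ab_group_add \<Rightarrow> 'b) \<Rightarrow>
   ('k \<Rightarrow> 'c::ab_group_add \<Rightarrow> 'c) \<Rightarrow> ('a \<Rightarrow> 'b \<Rightarrow> 'c) \<Rightarrow> bool" where
  "linear_family sa sb sc F \<longleftrightarrow>
     (\<forall>a. Vector_Spaces.linear sb sc (F a)) \<and> (\<forall>b. Vector_Spaces.linear sa sc (\<lambda>a. F a b))"

definition derivation ::
  "('k::field \<Rightarrow> 'a::ab_group_add \<Rightarrow> 'a) \<Rightarrow> ('a \<Rightarrow> 'a \<Rightarrow> 'a) \<Rightarrow> ('a \<Rightarrow> 'a) \<Rightarrow> bool" where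
  "derivation s br D \<longleftrightarrow> Vector_Spaces.linear s s D
     \<and> (\<forall>x y. D (br x y) = br (D x) y + br x (D y))"

definition crossed_module ::
  "('k::field \<Rightarrow> 'g::ab_group_add \<Rightarrow> 'g) \<Rightarrow> ('g \<Rightarrow> 'g \<Rightarrow> 'g) \<Rightarrow>
   ('k \<Rightarrow> 'h::ab_group_add \<Rightarrow> 'h) \<Rightarrow> ('h \<Rightarrow> 'h \<Rightarrow> 'h) \<Rightarrow>
   ('g \<Rightarrow> 'h) \<Rightarrow> ('h \<Rightarrow> 'g \<Rightarrow> 'g) \<Rightarrow> bool" where
  "crossed_module sg bg sh bh mu L \<longleftrightarrow>
     lie_algebra sg bg \<and> lie_algebra sh bh
     \<and> lie_hom sg bg sh bh mu
     \<and> (\<forall>y. derivation sg bg (L y))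
     \<and> (\<forall>x. Vector_Spaces.linear sh sg (\<lambda>y. L y x))
     \<and> (\<forall>y0 y1 x. L (bh y0 y1) x = L y0 (L y1 x) - L y1 (L y0 x))
     \<and> (\<forall>y x. mu (L y x) = bh y (mu x))
     \<and> (\<forall>x0 x1. L (mu x0) x1 = bg x0 x1)"

definition cm_morphism ::
  "('k::field \<Rightarrow> 'g::ab_group_add \<Rightarrow> 'g) \<Rightarrow> ('g \<Rightarrow> 'g \<Rightarrow> 'g) \<Rightarrow>
   ('k \<Rightarrow> 'h::ab_group_add \<Rightarrow> 'h) \<Rightarrow> ('h \<Rightarrow> 'h \<Rightarrow> 'h) \<Rightarrow>
   ('g \<Rightarrow> 'h) \<Rightarrow> ('h \<Rightarrow> 'g \<Rightarrow> 'g) \<Rightarrow>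
   ('k \<Rightarrow> 'g2::ab_group_add \<Rightarrow> 'g2) \<Rightarrow> ('g2 \<Rightarrow> 'g2 \<Rightarrow> 'g2) \<Rightarrow>
   ('k \<Rightarrow> 'h2::ab_group_add \<Rightarrow> 'h2) \<Rightarrow> ('h2 \<Rightarrow> 'h2 \<Rightarrow> 'h2) \<Rightarrow>
   ('g2 \<Rightarrow> 'h2) \<Rightarrow> ('h2 \<Rightarrow> 'g2 \<Rightarrow> 'g2) \<Rightarrow>
   ('g \<Rightarrow> 'g2) \<Rightarrow> ('h \<Rightarrow> 'h2) \<Rightarrow> bool" where
  "cm_morphism sg bg sh bh mu L sg' bg' sh' bh' mu' L' f1 f0 \<longleftrightarrow>
     lie_hom sg bg sg' bg' f1 \<and> lie_hom sh bh sh' bh' f0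
     \<and> (\<forall>x. f0 (mu x) = mu' (f1 x))
     \<and> (\<forall>y x. f1 (L y x) = L' (f0 y) (f1 x))"

definition cm_iso where
  "cm_iso sg bg sh bh mu L sg' bg' sh' bh' mu' L' f1 f0 \<longleftrightarrow>
     cm_morphism sg bg sh bh mu L sg' bg' sh' bh' mu' L' f1 f0
     \<and> (\<exists>g1 g0. cm_morphism sg' bg' sh' bh' mu' L' sg bg sh bh mu L g1 g0
          \<and> (\<forall>x. g1 (f1 x) = x) \<and> (\<forall>x. f1 (g1 x) = x)
          \<and> (\<forall>y. g0 (f0 y) = y) \<and> (\<forall>y. f0 (g0 y) = y))"

text \<open>Abelian brackets, zero action (used for W --phi--> V).\<close>
definition zero_br :: "'a \<Rightarrow> 'a \<Rightarrow> 'a::zero" where "zero_br x y = 0"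
definition zero_act :: "'b \<Rightarrow> 'a \<Rightarrow> 'a::zero" where "zero_act y x = 0"

definition two_rep where
  "two_rep sg bg sh bh mu L sW sV phi r01 r00 r1 \<longleftrightarrow>
     vector_space sW \<and> vector_space sV \<and> Vector_Spaces.linear sW sV phi
     \<and> linear_family sh sW sW r01 \<and> linear_family sh sV sV r00 \<and> linear_family sg sV sW r1
     \<and> (\<forall>y0 y1 w. r01 (bh y0 y1) w = r01 y0 (r01 y1 w) - r01 y1 (r01 y0 w))
     \<and> (\<forall>y0 y1 v. r00 (bh y0 y1) v = r00 y0 (r00 y1 v) - r00 y1 (r00 y0 v))
     \<and> (\<forall>y w. phi (r01 y w) = r00 y (phi w))
     \<and> (\<forall>x0 x1 v. r1 (bg x0 x1) v = r1 x0 (phi (r1 x1 v)) - r1 x1 (phi (r1 x0 v)))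
     \<and> (\<forall>x v. r00 (mu x) v = phi (r1 x v))
     \<and> (\<forall>x w. r01 (mu x) w = r1 x (phi w))
     \<and> (\<forall>y x v. r1 (L y x) v = r01 y (r1 x v) - r1 x (r00 y v))"

definition two_extension where
  "two_extension sg bg sh bh mu L sW sV phi se1 be1 se0 be0 eps Le i1 i0 p1 p0 \<longleftrightarrow>
     crossed_module se1 be1 se0 be0 eps Le
     \<and> cm_morphism sW zero_br sV zero_br phi zero_act se1 be1 se0 be0 eps Le i1 i0
     \<and> cm_morphism se1 be1 se0 be0 eps Le sg bg sh bh mu L p1 p0
     \<and> inj i1 \<and> surj p1 \<and> (\<forall>e. p1 e = 0 \<longleftrightarrow> e \<in> range i1)
     \<and> inj i0 \<and> surj p0 \<and> (\<forall>e. p0 e = 0 \<longleftrightarrow> e \<in> range i0)"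

definition ext_equiv where
  "ext_equiv se1 be1 se0 be0 eps Le i1 i0 p1 p0 se1' be1' se0' be0' eps' Le' i1' i0' p1' p0' \<longleftrightarrow>
     (\<exists>F1 F0. cm_iso se1 be1 se0 be0 eps Le se1' be1' se0' be0' eps' Le' F1 F0
        \<and> (\<forall>w. F1 (i1 w) = i1' w) \<and> (\<forall>v. F0 (i0 v) = i0' v)
        \<and> (\<forall>e. p1' (F1 e) = p1 e) \<and> (\<forall>e. p0' (F0 e) = p0 e))"

definition prod_scale ::
  "('k \<Rightarrow> 'a \<Rightarrow> 'a) \<Rightarrow> ('k \<Rightarrow> 'b \<Rightarrow> 'b) \<Rightarrow> 'k \<Rightarrow> 'a \<times> 'b \<Rightarrow> 'a \<times> 'b" where
  "prod_scale sa sb c p = (sa c (fst p), sb c (snd p))"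

definition e0_br where
  "e0_br bh r00 omega p q =
     (bh (fst p) (fst q), r00 (fst p) (snd q) - r00 (fst q) (snd p) - omega (fst p) (fst q))"

definition omega' where
  "omega' mu r1 alpha varphi x0 x1 = r1 x1 (varphi x0) + alpha (mu x0) x1"

definition e1_br where
  "e1_br bg mu r01 r1 alpha varphi p q =
     (bg (fst p) (fst q), r01 (mu (fst p)) (snd q) - r01 (mu (fst q)) (snd p)
        - omega' mu r1 alpha varphi (fst p) (fst q))"

definition e_eps where
  "e_eps mu phi varphi p = (mu (fst p), phi (snd p) + varphi (fst p))"

definition e_act where
  "e_act L r01 r1 alpha yv xw =
     (L (fst yv) (fst xw), r01 (fst yv) (snd xw) - r1 (fst xw) (snd yv) - alpha (fst yv) (fst xw))"

definition incl :: "'b \<Rightarrow> 'a::zero \<times> 'b" where "incl w = (0, w)"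

definition defines_2ext where
  "defines_2ext sg bg sh bh mu L sW sV phi r01 r00 r1 omega alpha varphi \<longleftrightarrow>
     two_extension sg bg sh bh mu L sW sV phi
       (prod_scale sg sW) (e1_br bg mu r01 r1 alpha varphi)
       (prod_scale sh sV) (e0_br bh r00 omega)
       (e_eps mu phi varphi) (e_act L r01 r1 alpha) incl incl fst fst"

definition ext_equiv_triples where
  "ext_equiv_triples sg bg sh bh mu L sW sV phi r01 r00 r1 omega1 alpha1 varphi1 omega2 alpha2 varphi2 \<longleftrightarrow>
     ext_equiv
       (prod_scale sg sW) (e1_br bg mu r01 r1 alpha1 varphi1)
       (prod_scale sh sV) (e0_br bh r00 omega1)
       (e_eps mu phi varphi1) (e_act L r01 r1 alpha1) incl incl fst fst
       (prod_scale sg sW) (e1_br bg mu r01 r1 alpha2 varphi2)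
       (prod_scale sh sV) (e0_br bh r00 omega2)
       (e_eps mu phi varphi2) (e_act L r01 r1 alpha2) incl incl fst fst"

end

theory Submission
  imports Defs
begin

lemma lin_add: "Vector_Spaces.linear s1 s2 f \<Longrightarrow> f (x + y) = f x + f y"
  by (simp add: Vector_Spaces.linear_iff)
lemma lin_scale: "Vector_Spaces.linear s1 s2 f \<Longrightarrow> f (s1 c x) = s2 c (f x)"
  by (simp add: Vector_Spaces.linear_iff)
lemma lin_diff: "Vector_Spaces.linear s1 s2 f \<Longrightarrow> f (x - y) = f x - f y"
  by (metis module_hom_iff_linear module_hom.diff)
lemma lin_zero: "Vector_Spaces.linear s1 s2 f \<Longrightarrow> f 0 = 0"
  by (metis module_hom_iff_linear module_hom.zero)
lemma lin_neg: "Vector_Spaces.linear s1 s2 f \<Longrightarrow> f (- x) = - f x"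
  by (metis module_hom_iff_linear module_hom.neg)
lemma vs_add: "vector_space s \<Longrightarrow> s c (a + b) = s c a + s c b"
  by (simp add: vector_space_def)
lemma vs_zero: "vector_space s \<Longrightarrow> s c 0 = 0"
  by (metis module.scale_zero_right module_iff_vector_space)

lemma vs_neg: "vector_space s \<Longrightarrow> s c (- a) = - s c a"
  by (metis module.scale_minus_right module_iff_vector_space)

lemma morph_from_lam:
  fixes sg :: "'k::field \<Rightarrow> 'g::ab_group_add \<Rightarrow> 'g" and bg :: "'g \<Rightarrow> 'g \<Rightarrow> 'g"
    and sh :: "'k \<Rightarrow> 'h::ab_group_add \<Rightarrow> 'h" and bh :: "'h \<Rightarrow> 'h \<Rightarrow> 'h"
    and sW :: "'k \<Rightarrow> 'w::ab_group_add \<Rightarrow> 'w" and sV :: "'k \<Rightarrow> 'v::ab_group_add \<Rightarrow> 'v"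
    and mu :: "'g \<Rightarrow> 'h" and L :: "'h \<Rightarrow> 'g \<Rightarrow> 'g" and phi :: "'w \<Rightarrow> 'v"
    and r01 :: "'h \<Rightarrow> 'w \<Rightarrow> 'w" and r00 :: "'h \<Rightarrow> 'v \<Rightarrow> 'v" and r1 :: "'g \<Rightarrow> 'v \<Rightarrow> 'w"
    and omega1 omega2 :: "'h \<Rightarrow> 'h \<Rightarrow> 'v"
    and alpha1 alpha2 :: "'h \<Rightarrow> 'g \<Rightarrow> 'w"
    and varphi1 varphi2 :: "'g \<Rightarrow> 'v"
  assumes cm: "crossed_module sg bg sh bh mu L"
    and rep: "two_rep sg bg sh bh mu L sW sV phi r01 r00 r1"
    and VS1: "vector_space (prod_scale sg sW)"
    and VS0: "vector_space (prod_scale sh sV)"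
    and l0: "Vector_Spaces.linear sh sV lam0" and l1: "Vector_Spaces.linear sg sW lam1"
    and ca: "\<forall>y0 y1. omega2 y0 y1 - omega1 y0 y1
                     = r00 y0 (lam0 y1) - r00 y1 (lam0 y0) - lam0 (bh y0 y1)"
    and cb: "\<forall>y x. alpha2 y x - alpha1 y x
                     = r01 y (lam1 x) - lam1 (L y x) - r1 x (lam0 y)"
    and cc: "\<forall>x. varphi2 x - varphi1 x = lam0 (mu x) - phi (lam1 x)"
  shows "cm_morphism (prod_scale sg sW) (e1_br bg mu r01 r1 alpha1 varphi1)
       (prod_scale sh sV) (e0_br bh r00 omega1)
       (e_eps mu phi varphi1) (e_act L r01 r1 alpha1)
       (prod_scale sg sW) (e1_br bg mu r01 r1 alpha2 varphi2)
       (prod_scale sh sV) (e0_br bh r00 omega2)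
       (e_eps mu phi varphi2) (e_act L r01 r1 alpha2)
       (\<lambda>p. (fst p, snd p + lam1 (fst p))) (\<lambda>p. (fst p, snd p + lam0 (fst p)))"
proof -
  have vsW: "vector_space sW" and vsV: "vector_space sV" and lphi: "Vector_Spaces.linear sW sV phi"
    using rep by (auto simp: two_rep_def)
  have r01l: "\<And>y. Vector_Spaces.linear sW sW (r01 y)" and r00l: "\<And>y. Vector_Spaces.linear sV sV (r00 y)"
    and r1l: "\<And>x. Vector_Spaces.linear sV sW (r1 x)"
    using rep by (auto simp: two_rep_def linear_family_def)
  have r1phi: "\<And>x w. r1 x (phi w) = r01 (mu x) w" using rep by (auto simp: two_rep_def)
  have Lmu: "\<And>x0 x1. L (mu x0) x1 = bg x0 x1" using cm by (auto simp: crossed_module_def)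
  have a2: "\<And>y x. alpha2 y x = alpha1 y x + (r01 y (lam1 x) - lam1 (L y x) - r1 x (lam0 y))"
    using cb by (metis add.commute diff_add_cancel)
  have o2: "\<And>y0 y1. omega2 y0 y1 = omega1 y0 y1 + (r00 y0 (lam0 y1) - r00 y1 (lam0 y0) - lam0 (bh y0 y1))"
    using ca by (metis add.commute diff_add_cancel)
  have p2: "\<And>x. varphi2 x = varphi1 x + (lam0 (mu x) - phi (lam1 x))"
    using cc by (metis add.commute diff_add_cancel)
  note lin = lin_add[OF r01l] lin_diff[OF r01l] lin_add[OF r00l] lin_diff[OF r00l]
     lin_add[OF r1l] lin_diff[OF r1l] lin_add[OF lphi] lin_diff[OF lphi]
     lin_add[OF l0] lin_add[OF l1]
  have linF1: "Vector_Spaces.linear (prod_scale sg sW) (prod_scale sg sW) (\<lambda>p. (fst p, snd p + lam1 (fst p)))"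
    unfolding Vector_Spaces.linear_iff using VS1
    by (simp add: prod_scale_def lin_add[OF l1] lin_scale[OF l1] vs_add[OF vsW] algebra_simps)
  have linF0: "Vector_Spaces.linear (prod_scale sh sV) (prod_scale sh sV) (\<lambda>p. (fst p, snd p + lam0 (fst p)))"
    unfolding Vector_Spaces.linear_iff using VS0
    by (simp add: prod_scale_def lin_add[OF l0] lin_scale[OF l0] vs_add[OF vsV] algebra_simps)
  show ?thesis
    unfolding cm_morphism_def lie_hom_def
    using linF1 linF0
    by (simp add: e1_br_def e0_br_def omega'_def e_eps_def e_act_def a2 o2 p2 lin r1phi Lmu algebra_simps)
qed

theorem mainTheorem17:
  fixes sg :: "'k::field \<Rightarrow> 'g::ab_group_add \<Rightarrow> 'g" and bg :: "'g \<Rightarrow> 'g \<Rightarrow> 'g"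
    and sh :: "'k \<Rightarrow> 'h::ab_group_add \<Rightarrow> 'h" and bh :: "'h \<Rightarrow> 'h \<Rightarrow> 'h"
    and sW :: "'k \<Rightarrow> 'w::ab_group_add \<Rightarrow> 'w" and sV :: "'k \<Rightarrow> 'v::ab_group_add \<Rightarrow> 'v"
    and mu :: "'g \<Rightarrow> 'h" and L :: "'h \<Rightarrow> 'g \<Rightarrow> 'g" and phi :: "'w \<Rightarrow> 'v"
    and r01 :: "'h \<Rightarrow> 'w \<Rightarrow> 'w" and r00 :: "'h \<Rightarrow> 'v \<Rightarrow> 'v" and r1 :: "'g \<Rightarrow> 'v \<Rightarrow> 'w"
    and omega1 omega2 :: "'h \<Rightarrow> 'h \<Rightarrow> 'v"
    and alpha1 alpha2 :: "'h \<Rightarrow> 'g \<Rightarrow> 'w"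
    and varphi1 varphi2 :: "'g \<Rightarrow> 'v"
  assumes cm: "crossed_module sg bg sh bh mu L"
    and rep: "two_rep sg bg sh bh mu L sW sV phi r01 r00 r1"
    and om1: "linear_family sh sh sV omega1" "\<forall>y. omega1 y y = 0"
    and om2: "linear_family sh sh sV omega2" "\<forall>y. omega2 y y = 0"
    and al1: "linear_family sh sg sW alpha1"
    and al2: "linear_family sh sg sW alpha2"
    and vp1: "Vector_Spaces.linear sg sV varphi1"
    and vp2: "Vector_Spaces.linear sg sV varphi2"
    and E1: "defines_2ext sg bg sh bh mu L sW sV phi r01 r00 r1 omega1 alpha1 varphi1"
    and E2: "defines_2ext sg bg sh bh mu L sW sV phi r01 r00 r1 omega2 alpha2 varphi2"
  shows "ext_equiv_triples sg bg sh bh mu L sW sV phi r01 r00 r1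
           omega1 alpha1 varphi1 omega2 alpha2 varphi2
         \<longleftrightarrow> (\<exists>lam0 lam1. Vector_Spaces.linear sh sV lam0 \<and> Vector_Spaces.linear sg sW lam1
              \<and> (\<forall>y0 y1. omega2 y0 y1 - omega1 y0 y1
                     = r00 y0 (lam0 y1) - r00 y1 (lam0 y0) - lam0 (bh y0 y1))
              \<and> (\<forall>y x. alpha2 y x - alpha1 y x
                     = r01 y (lam1 x) - lam1 (L y x) - r1 x (lam0 y))
              \<and> (\<forall>x. varphi2 x - varphi1 x = lam0 (mu x) - phi (lam1 x)))"
proof -
  have vsW: "vector_space sW" and vsV: "vector_space sV" and lphi: "Vector_Spaces.linear sW sV phi"
    using rep by (auto simp: two_rep_def)
  have vsh: "vector_space sh" and vsg: "vector_space sg"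
    using cm by (auto simp: crossed_module_def lie_algebra_def)
  have r01l: "\<And>y. Vector_Spaces.linear sW sW (r01 y)" and r00l: "\<And>y. Vector_Spaces.linear sV sV (r00 y)"
    and r1l: "\<And>x. Vector_Spaces.linear sV sW (r1 x)"
    using rep by (auto simp: two_rep_def linear_family_def)
  have VS1: "vector_space (prod_scale sg sW)" and VS0: "vector_space (prod_scale sh sV)"
    using E1 by (auto simp: defines_2ext_def two_extension_def crossed_module_def lie_algebra_def)
  show ?thesis
  proof
    assume "ext_equiv_triples sg bg sh bh mu L sW sV phi r01 r00 r1
           omega1 alpha1 varphi1 omega2 alpha2 varphi2"
    then obtain F1 F0 where
      mor: "cm_morphism (prod_scale sg sW) (e1_br bg mu r01 r1 alpha1 varphi1)
       (prod_scale sh sV) (e0_br bh r00 omega1)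
       (e_eps mu phi varphi1) (e_act L r01 r1 alpha1)
       (prod_scale sg sW) (e1_br bg mu r01 r1 alpha2 varphi2)
       (prod_scale sh sV) (e0_br bh r00 omega2)
       (e_eps mu phi varphi2) (e_act L r01 r1 alpha2) F1 F0"
      and i1: "\<forall>w. F1 (incl w) = incl w" and i0: "\<forall>v. F0 (incl v) = incl v"
      and p1: "\<forall>e. fst (F1 e) = fst e" and p0: "\<forall>e. fst (F0 e) = fst e"
      unfolding ext_equiv_triples_def ext_equiv_def cm_iso_def by blast
    have lF1: "Vector_Spaces.linear (prod_scale sg sW) (prod_scale sg sW) F1"
      and lF0: "Vector_Spaces.linear (prod_scale sh sV) (prod_scale sh sV) F0"
      and br1: "\<And>p q. F1 (e1_br bg mu r01 r1 alpha1 varphi1 p q) = e1_br bg mu r01 r1 alpha2 varphi2 (F1 p) (F1 q)"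
      and br0: "\<And>p q. F0 (e0_br bh r00 omega1 p q) = e0_br bh r00 omega2 (F0 p) (F0 q)"
      and epsc: "\<And>x. F0 (e_eps mu phi varphi1 x) = e_eps mu phi varphi2 (F1 x)"
      and actc: "\<And>y x. F1 (e_act L r01 r1 alpha1 y x) = e_act L r01 r1 alpha2 (F0 y) (F1 x)"
      using mor unfolding cm_morphism_def lie_hom_def by auto
    define lam0 where "lam0 y = snd (F0 (y, 0))" for y
    define lam1 where "lam1 x = snd (F1 (x, 0))" for x
    have F0f: "F0 (y, v) = (y, v + lam0 y)" for y v
    proof -
      have "F0 (y, v) = F0 ((y, 0) + incl v)" by (simp add: incl_def)
      also have "\<dots> = F0 (y, 0) + incl v" using lin_add[OF lF0] i0 by simp
      also have "F0 (y, 0) = (y, lam0 y)" using p0 lam0_def by (metis fst_conv prod.collapse)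
      finally show ?thesis by (simp add: incl_def add.commute)
    qed
    have F1f: "F1 (x, w) = (x, w + lam1 x)" for x w
    proof -
      have "F1 (x, w) = F1 ((x, 0) + incl w)" by (simp add: incl_def)
      also have "\<dots> = F1 (x, 0) + incl w" using lin_add[OF lF1] i1 by simp
      also have "F1 (x, 0) = (x, lam1 x)" using p1 lam1_def by (metis fst_conv prod.collapse)
      finally show ?thesis by (simp add: incl_def add.commute)
    qed
    have l0: "Vector_Spaces.linear sh sV lam0"
      unfolding Vector_Spaces.linear_iff
    proof (intro conjI allI vsh vsV)
      fix a b
      have "F0 ((a, 0) + (b, 0)) = F0 (a, 0) + F0 (b, 0)" using lin_add[OF lF0] .
      then show "lam0 (a + b) = lam0 a + lam0 b" by (simp add: F0f)
    next
      fix c a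
      have "F0 (prod_scale sh sV c (a, 0)) = prod_scale sh sV c (F0 (a, 0))" using lin_scale[OF lF0] .
      then show "lam0 (sh c a) = sV c (lam0 a)" by (simp add: F0f prod_scale_def vs_zero[OF vsV])
    qed
    have l1: "Vector_Spaces.linear sg sW lam1"
      unfolding Vector_Spaces.linear_iff
    proof (intro conjI allI vsg vsW)
      fix a b
      have "F1 ((a, 0) + (b, 0)) = F1 (a, 0) + F1 (b, 0)" using lin_add[OF lF1] .
      then show "lam1 (a + b) = lam1 a + lam1 b" by (simp add: F1f)
    next
      fix c a
      have "F1 (prod_scale sg sW c (a, 0)) = prod_scale sg sW c (F1 (a, 0))" using lin_scale[OF lF1] .
      then show "lam1 (sg c a) = sW c (lam1 a)" by (simp add: F1f prod_scale_def vs_zero[OF vsW])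
    qed
    have ca: "omega2 y0 y1 - omega1 y0 y1
                     = r00 y0 (lam0 y1) - r00 y1 (lam0 y0) - lam0 (bh y0 y1)" for y0 y1
    proof -
      have "F0 (e0_br bh r00 omega1 (y0, 0) (y1, 0)) = e0_br bh r00 omega2 (F0 (y0, 0)) (F0 (y1, 0))"
        using br0 .
      then have "- omega1 y0 y1 + lam0 (bh y0 y1) = r00 y0 (lam0 y1) - r00 y1 (lam0 y0) - omega2 y0 y1"
        by (simp add: F0f e0_br_def lin_zero[OF r00l])
      then show ?thesis by (simp add: algebra_simps)
    qed
    have cb: "alpha2 y x - alpha1 y x
                     = r01 y (lam1 x) - lam1 (L y x) - r1 x (lam0 y)" for y x
    proof -
      have "F1 (e_act L r01 r1 alpha1 (y, 0) (x, 0)) = e_act L r01 r1 alpha2 (F0 (y, 0)) (F1 (x, 0))"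
        using actc .
      then have "- alpha1 y x + lam1 (L y x) = r01 y (lam1 x) - r1 x (lam0 y) - alpha2 y x"
        by (simp add: F0f F1f e_act_def lin_zero[OF r01l] lin_zero[OF r1l])
      then show ?thesis by (simp add: algebra_simps)
    qed
    have cc: "varphi2 x - varphi1 x = lam0 (mu x) - phi (lam1 x)" for x
    proof -
      have "F0 (e_eps mu phi varphi1 (x, 0)) = e_eps mu phi varphi2 (F1 (x, 0))"
        using epsc .
      then have "varphi1 x + lam0 (mu x) = phi (lam1 x) + varphi2 x"
        by (simp add: F0f F1f e_eps_def lin_zero[OF lphi])
      then show ?thesis by (simp add: algebra_simps)
    qed
    show "\<exists>lam0 lam1. Vector_Spaces.linear sh sV lam0 \<and> Vector_Spaces.linear sg sW lam1
              \<and> (\<forall>y0 y1. omega2 y0 y1 - omega1 y0 y1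
                     = r00 y0 (lam0 y1) - r00 y1 (lam0 y0) - lam0 (bh y0 y1))
              \<and> (\<forall>y x. alpha2 y x - alpha1 y x
                     = r01 y (lam1 x) - lam1 (L y x) - r1 x (lam0 y))
              \<and> (\<forall>x. varphi2 x - varphi1 x = lam0 (mu x) - phi (lam1 x))"
      using l0 l1 ca cb cc by blast
  next
    assume "\<exists>lam0 lam1. Vector_Spaces.linear sh sV lam0 \<and> Vector_Spaces.linear sg sW lam1
              \<and> (\<forall>y0 y1. omega2 y0 y1 - omega1 y0 y1
                     = r00 y0 (lam0 y1) - r00 y1 (lam0 y0) - lam0 (bh y0 y1))
              \<and> (\<forall>y x. alpha2 y x - alpha1 y x
                     = r01 y (lam1 x) - lam1 (L y x) - r1 x (lam0 y))
              \<and> (\<forall>x. varphi2 x - varphi1 x = lam0 (mu x) - phi (lam1 x))"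
    then obtain lam0 lam1 where l0: "Vector_Spaces.linear sh sV lam0" and l1: "Vector_Spaces.linear sg sW lam1"
      and ca: "\<forall>y0 y1. omega2 y0 y1 - omega1 y0 y1
                     = r00 y0 (lam0 y1) - r00 y1 (lam0 y0) - lam0 (bh y0 y1)"
      and cb: "\<forall>y x. alpha2 y x - alpha1 y x
                     = r01 y (lam1 x) - lam1 (L y x) - r1 x (lam0 y)"
      and cc: "\<forall>x. varphi2 x - varphi1 x = lam0 (mu x) - phi (lam1 x)"
      by blast
    have nl0: "Vector_Spaces.linear sh sV (\<lambda>y. - lam0 y)"
      unfolding Vector_Spaces.linear_iff using vsh vsV
      by (simp add: lin_add[OF l0] lin_scale[OF l0] vs_neg[OF vsV])
    have nl1: "Vector_Spaces.linear sg sW (\<lambda>y. - lam1 y)"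
      unfolding Vector_Spaces.linear_iff using vsg vsW
      by (simp add: lin_add[OF l1] lin_scale[OF l1] vs_neg[OF vsW])
    have F: "cm_morphism (prod_scale sg sW) (e1_br bg mu r01 r1 alpha1 varphi1)
       (prod_scale sh sV) (e0_br bh r00 omega1)
       (e_eps mu phi varphi1) (e_act L r01 r1 alpha1)
       (prod_scale sg sW) (e1_br bg mu r01 r1 alpha2 varphi2)
       (prod_scale sh sV) (e0_br bh r00 omega2)
       (e_eps mu phi varphi2) (e_act L r01 r1 alpha2)
       (\<lambda>p. (fst p, snd p + lam1 (fst p))) (\<lambda>p. (fst p, snd p + lam0 (fst p)))"
      by (rule morph_from_lam[OF cm rep VS1 VS0 l0 l1 ca cb cc])
    have ca': "\<forall>y0 y1. omega1 y0 y1 - omega2 y0 y1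
                     = r00 y0 (- lam0 y1) - r00 y1 (- lam0 y0) - (- lam0 (bh y0 y1))"
    proof (intro allI)
      fix y0 y1 show "omega1 y0 y1 - omega2 y0 y1
                     = r00 y0 (- lam0 y1) - r00 y1 (- lam0 y0) - (- lam0 (bh y0 y1))"
        using ca[rule_format, of y0 y1] by (simp add: lin_neg[OF r00l] algebra_simps)
    qed
    have cb': "\<forall>y x. alpha1 y x - alpha2 y x
                     = r01 y (- lam1 x) - (- lam1 (L y x)) - r1 x (- lam0 y)"
    proof (intro allI)
      fix y x show "alpha1 y x - alpha2 y x
                     = r01 y (- lam1 x) - (- lam1 (L y x)) - r1 x (- lam0 y)"
        using cb[rule_format, of y x] by (simp add: lin_neg[OF r01l] lin_neg[OF r1l] algebra_simps)
    qed
    have cc': "\<forall>x. varphi1 x - varphi2 x = - lam0 (mu x) - phi (- lam1 x)"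
    proof (intro allI)
      fix x show "varphi1 x - varphi2 x = - lam0 (mu x) - phi (- lam1 x)"
        using cc[rule_format, of x] by (simp add: lin_neg[OF lphi] algebra_simps)
    qed
    have G: "cm_morphism (prod_scale sg sW) (e1_br bg mu r01 r1 alpha2 varphi2)
       (prod_scale sh sV) (e0_br bh r00 omega2)
       (e_eps mu phi varphi2) (e_act L r01 r1 alpha2)
       (prod_scale sg sW) (e1_br bg mu r01 r1 alpha1 varphi1)
       (prod_scale sh sV) (e0_br bh r00 omega1)
       (e_eps mu phi varphi1) (e_act L r01 r1 alpha1)
       (\<lambda>p. (fst p, snd p + - lam1 (fst p))) (\<lambda>p. (fst p, snd p + - lam0 (fst p)))"
      by (rule morph_from_lam[OF cm rep VS1 VS0 nl0 nl1 ca' cb' cc'])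
    show "ext_equiv_triples sg bg sh bh mu L sW sV phi r01 r00 r1
           omega1 alpha1 varphi1 omega2 alpha2 varphi2"
      unfolding ext_equiv_triples_def ext_equiv_def cm_iso_def
      apply (rule exI[of _ "\<lambda>p. (fst p, snd p + lam1 (fst p))"])
      apply (rule exI[of _ "\<lambda>p. (fst p, snd p + lam0 (fst p))"])
      apply (intro conjI F)
      apply (rule exI[of _ "\<lambda>p. (fst p, snd p + - lam1 (fst p))"])
      apply (rule exI[of _ "\<lambda>p. (fst p, snd p + - lam0 (fst p))"])
      using G by (auto simp: incl_def lin_zero[OF l0] lin_zero[OF l1])
  qed
qed

end
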